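(* Let $A$ and $B$ be rings, $f: A\to B$ a ring homomorphism and $J$ a proper ideal of $B$ such that $f^{-1}(J)\subseteq\mathrm{nil}(A)$. If $f(A)+J$ is a weak Armendariz ring, then $A\bowtie^{f}J$ is a weak Armendariz ring.
   Context: All rings are associative with identity (not necessarily commutative), ring homomorphisms are unital, and ideals are two-sided. $\mathrm{nil}(R)$ denotes the set of nilpotent elements of a ring $R$. For a ring homomorphism $f:A\to B$ and an ideal $J$ of $B$, the amalgamation is the subring $A\bowtie^{f}J=\{(a,f(a)+j)\mid a\in A,\ j\in J\}$ of $A\times B$; $f(A)+J=\{f(a)+j: a\in A, j\in J\}$ is a subring of $B$. A ring $R$ is weak Armendariz if whenever $p(x)=\sum_{i=0}^n a_ix^i$ and $q(x)=\sum_{j=0}^m b_jx^j$ in $R[x]$ satisfy $p(x)q(x)=0$, then $a_ib_j\in\mathrm{nil}(R)$ for all $i,j$. *)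

theory Defs
  imports "HOL-Algebra.Chinese_Remainder" "HOL-Algebra.UnivPoly"
begin

definition nilpotents :: "('a, 'm) ring_scheme \<Rightarrow> 'a set" where
  "nilpotents R = {x \<in> carrier R. \<exists>n::nat. x [^]\<^bsub>R\<^esub> n = \<zero>\<^bsub>R\<^esub>}"

definition weak_armendariz :: "('a, 'm) ring_scheme \<Rightarrow> bool" where
  "weak_armendariz R \<longleftrightarrow>
     (\<forall>p \<in> carrier (UP R). \<forall>q \<in> carrier (UP R).
        p \<otimes>\<^bsub>UP R\<^esub> q = \<zero>\<^bsub>UP R\<^esub> \<longrightarrow>
        (\<forall>i j. coeff (UP R) p i \<otimes>\<^bsub>R\<^esub> coeff (UP R) q j \<in> nilpotents R))"

definition hom_plus_ideal ::
  "('a, 'm) ring_scheme \<Rightarrow> ('b, 'n) ring_scheme \<Rightarrow> ('a \<Rightarrow> 'b) \<Rightarrow> 'b set \<Rightarrow> ('b, 'n) ring_scheme" where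
  "hom_plus_ideal A B f J = B\<lparr>carrier := {f a \<oplus>\<^bsub>B\<^esub> j | a j. a \<in> carrier A \<and> j \<in> J}\<rparr>"

definition amalgamation ::
  "('a, 'm) ring_scheme \<Rightarrow> ('b, 'n) ring_scheme \<Rightarrow> ('a \<Rightarrow> 'b) \<Rightarrow> 'b set \<Rightarrow> ('a \<times> 'b) ring" where
  "amalgamation A B f J = (RDirProd A B)\<lparr>carrier := {(a, f a \<oplus>\<^bsub>B\<^esub> j) | a j. a \<in> carrier A \<and> j \<in> J}\<rparr>"

end

theory Submission
  imports Defs "HOL-Algebra.Subrings"
begin

lemma RDP_simps:
  "(a, b) \<otimes>\<^bsub>RDirProd A B\<^esub> (c, d) = (a \<otimes>\<^bsub>A\<^esub> c, b \<otimes>\<^bsub>B\<^esub> d)"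
  "(a, b) \<oplus>\<^bsub>RDirProd A B\<^esub> (c, d) = (a \<oplus>\<^bsub>A\<^esub> c, b \<oplus>\<^bsub>B\<^esub> d)"
  "\<one>\<^bsub>RDirProd A B\<^esub> = (\<one>\<^bsub>A\<^esub>, \<one>\<^bsub>B\<^esub>)"
  "\<zero>\<^bsub>RDirProd A B\<^esub> = (\<zero>\<^bsub>A\<^esub>, \<zero>\<^bsub>B\<^esub>)"
  by (simp_all add: RDirProd_def DirProd_def monoid.defs)

lemma RDP_inv:
  assumes "ring A" "ring B" "a \<in> carrier A" "b \<in> carrier B"
  shows "\<ominus>\<^bsub>RDirProd A B\<^esub> (a, b) = (\<ominus>\<^bsub>A\<^esub> a, \<ominus>\<^bsub>B\<^esub> b)"
proof -
  interpret P: ring "RDirProd A B" using RDirProd_ring assms by blast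
  interpret A: ring A by fact
  interpret B: ring B by fact
  show ?thesis
    by (rule P.minus_equality) (auto simp: RDP_simps RDirProd_carrier assms A.l_neg B.l_neg)
qed

lemma pow_RDP:
  "(a, b) [^]\<^bsub>RDirProd A B\<^esub> (n::nat) = (a [^]\<^bsub>A\<^esub> n, b [^]\<^bsub>B\<^esub> n)"
  by (induct n) (simp_all add: RDP_simps)

lemma pow_upd:
  "x [^]\<^bsub>B\<lparr>carrier := X\<rparr>\<^esub> (n::nat) = x [^]\<^bsub>B\<^esub> n"
  by (simp add: nat_pow_def)

lemma hpi_subring:
  assumes "ring A" "ring B" "f \<in> ring_hom A B" "ideal J B"
  shows "subring {f a \<oplus>\<^bsub>B\<^esub> j | a j. a \<in> carrier A \<and> j \<in> J} B"
proof -
  interpret A: ring A by fact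
  interpret B: ring B by fact
  interpret h: ring_hom_ring A B f using assms by (simp add: ring_hom_ringI2)
  interpret J: ideal J B by fact
  show ?thesis
  proof (rule B.subringI)
    show "{f a \<oplus>\<^bsub>B\<^esub> j | a j. a \<in> carrier A \<and> j \<in> J} \<subseteq> carrier B" by auto
    show "\<one>\<^bsub>B\<^esub> \<in> {f a \<oplus>\<^bsub>B\<^esub> j | a j. a \<in> carrier A \<and> j \<in> J}"
      by (rule CollectI, rule exI[of _ "\<one>\<^bsub>A\<^esub>"], rule exI[of _ "\<zero>\<^bsub>B\<^esub>"]) auto
  next
    fix h assume "h \<in> {f a \<oplus>\<^bsub>B\<^esub> j | a j. a \<in> carrier A \<and> j \<in> J}"
    then obtain a j where h: "h = f a \<oplus>\<^bsub>B\<^esub> j" "a \<in> carrier A" "j \<in> J" by blast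
    have "\<ominus>\<^bsub>B\<^esub> h = f (\<ominus>\<^bsub>A\<^esub> a) \<oplus>\<^bsub>B\<^esub> (\<ominus>\<^bsub>B\<^esub> j)"
      using h by (simp add: B.minus_add)
    then show "\<ominus>\<^bsub>B\<^esub> h \<in> {f a \<oplus>\<^bsub>B\<^esub> j | a j. a \<in> carrier A \<and> j \<in> J}"
      using h by blast
  next
    fix h1 h2 assume "h1 \<in> {f a \<oplus>\<^bsub>B\<^esub> j | a j. a \<in> carrier A \<and> j \<in> J}"
      "h2 \<in> {f a \<oplus>\<^bsub>B\<^esub> j | a j. a \<in> carrier A \<and> j \<in> J}"
    then obtain a j a' j' where h: "h1 = f a \<oplus>\<^bsub>B\<^esub> j" "a \<in> carrier A" "j \<in> J"
      "h2 = f a' \<oplus>\<^bsub>B\<^esub> j'" "a' \<in> carrier A" "j' \<in> J" by blast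
    have jc: "j \<in> carrier B" "j' \<in> carrier B" using h by auto
    have "h1 \<otimes>\<^bsub>B\<^esub> h2 = f (a \<otimes>\<^bsub>A\<^esub> a') \<oplus>\<^bsub>B\<^esub> (f a \<otimes>\<^bsub>B\<^esub> j' \<oplus>\<^bsub>B\<^esub> j \<otimes>\<^bsub>B\<^esub> f a' \<oplus>\<^bsub>B\<^esub> j \<otimes>\<^bsub>B\<^esub> j')"
      using h jc by (simp add: B.l_distr B.r_distr B.a_ac)
    moreover have "f a \<otimes>\<^bsub>B\<^esub> j' \<oplus>\<^bsub>B\<^esub> j \<otimes>\<^bsub>B\<^esub> f a' \<oplus>\<^bsub>B\<^esub> j \<otimes>\<^bsub>B\<^esub> j' \<in> J"
      using h jc by (simp add: J.I_l_closed J.I_r_closed)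
    ultimately show "h1 \<otimes>\<^bsub>B\<^esub> h2 \<in> {f a \<oplus>\<^bsub>B\<^esub> j | a j. a \<in> carrier A \<and> j \<in> J}"
      using h by blast
    have "h1 \<oplus>\<^bsub>B\<^esub> h2 = f (a \<oplus>\<^bsub>A\<^esub> a') \<oplus>\<^bsub>B\<^esub> (j \<oplus>\<^bsub>B\<^esub> j')"
      using h jc by (simp add: B.a_ac)
    then show "h1 \<oplus>\<^bsub>B\<^esub> h2 \<in> {f a \<oplus>\<^bsub>B\<^esub> j | a j. a \<in> carrier A \<and> j \<in> J}"
      using h by blast
  qed
qed

lemma amal_subring:
  assumes "ring A" "ring B" "f \<in> ring_hom A B" "ideal J B"
  shows "subring {(a, f a \<oplus>\<^bsub>B\<^esub> j) | a j. a \<in> carrier A \<and> j \<in> J} (RDirProd A B)"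
proof -
  interpret A: ring A by fact
  interpret B: ring B by fact
  interpret P: ring "RDirProd A B" using RDirProd_ring assms by blast
  interpret h: ring_hom_ring A B f using assms by (simp add: ring_hom_ringI2)
  interpret J: ideal J B by fact
  let ?C = "{(a, f a \<oplus>\<^bsub>B\<^esub> j) | a j. a \<in> carrier A \<and> j \<in> J}"
  show ?thesis
  proof (rule P.subringI)
    show "?C \<subseteq> carrier (RDirProd A B)" by (auto simp: RDirProd_carrier)
    show "\<one>\<^bsub>RDirProd A B\<^esub> \<in> ?C" unfolding RDP_simps
      by (rule CollectI, rule exI[of _ "\<one>\<^bsub>A\<^esub>"], rule exI[of _ "\<zero>\<^bsub>B\<^esub>"]) auto
  next
    fix h assume "h \<in> ?C"
    then obtain a j where h: "h = (a, f a \<oplus>\<^bsub>B\<^esub> j)" "a \<in> carrier A" "j \<in> J" by blast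
    have "\<ominus>\<^bsub>RDirProd A B\<^esub> h = (\<ominus>\<^bsub>A\<^esub> a, f (\<ominus>\<^bsub>A\<^esub> a) \<oplus>\<^bsub>B\<^esub> (\<ominus>\<^bsub>B\<^esub> j))"
      using h by (simp add: B.minus_add RDP_inv assms)
    then show "\<ominus>\<^bsub>RDirProd A B\<^esub> h \<in> ?C"
      using h by blast
  next
    fix h1 h2 assume "h1 \<in> ?C" "h2 \<in> ?C"
    then obtain a j a' j' where h: "h1 = (a, f a \<oplus>\<^bsub>B\<^esub> j)" "a \<in> carrier A" "j \<in> J"
      "h2 = (a', f a' \<oplus>\<^bsub>B\<^esub> j')" "a' \<in> carrier A" "j' \<in> J" by blast
    have jc: "j \<in> carrier B" "j' \<in> carrier B" using h by auto
    have "h1 \<otimes>\<^bsub>RDirProd A B\<^esub> h2 = (a \<otimes>\<^bsub>A\<^esub> a', f (a \<otimes>\<^bsub>A\<^esub> a') \<oplus>\<^bsub>B\<^esub> (f a \<otimes>\<^bsub>B\<^esub> j' \<oplus>\<^bsub>B\<^esub> j \<otimes>\<^bsub>B\<^esub> f a' \<oplus>\<^bsub>B\<^esub> j \<otimes>\<^bsub>B\<^esub> j'))"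
      using h jc by (simp add: RDP_simps B.l_distr B.r_distr B.a_ac)
    moreover have "f a \<otimes>\<^bsub>B\<^esub> j' \<oplus>\<^bsub>B\<^esub> j \<otimes>\<^bsub>B\<^esub> f a' \<oplus>\<^bsub>B\<^esub> j \<otimes>\<^bsub>B\<^esub> j' \<in> J"
      using h jc by (simp add: J.I_l_closed J.I_r_closed)
    ultimately show "h1 \<otimes>\<^bsub>RDirProd A B\<^esub> h2 \<in> ?C"
      using h by blast
    have "h1 \<oplus>\<^bsub>RDirProd A B\<^esub> h2 = (a \<oplus>\<^bsub>A\<^esub> a', f (a \<oplus>\<^bsub>A\<^esub> a') \<oplus>\<^bsub>B\<^esub> (j \<oplus>\<^bsub>B\<^esub> j'))"
      using h jc by (simp add: RDP_simps B.a_ac)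
    then show "h1 \<oplus>\<^bsub>RDirProd A B\<^esub> h2 \<in> ?C"
      using h by blast
  qed
qed

lemma pow_diff_in_ideal:
  assumes "ring B" "ideal J B" "x \<in> carrier B" "y \<in> carrier B" "x \<ominus>\<^bsub>B\<^esub> y \<in> J"
  shows "x [^]\<^bsub>B\<^esub> (n::nat) \<ominus>\<^bsub>B\<^esub> y [^]\<^bsub>B\<^esub> n \<in> J"
proof (induct n)
  interpret B: ring B by fact
  interpret J: ideal J B by fact
  case 0 show ?case by (simp add: B.r_neg B.minus_eq)
next
  interpret B: ring B by fact
  interpret J: ideal J B by fact
  case (Suc n)
  have "x [^]\<^bsub>B\<^esub> Suc n \<ominus>\<^bsub>B\<^esub> y [^]\<^bsub>B\<^esub> Suc n
     = (x [^]\<^bsub>B\<^esub> n \<ominus>\<^bsub>B\<^esub> y [^]\<^bsub>B\<^esub> n) \<otimes>\<^bsub>B\<^esub> x \<oplus>\<^bsub>B\<^esub> y [^]\<^bsub>B\<^esub> n \<otimes>\<^bsub>B\<^esub> (x \<ominus>\<^bsub>B\<^esub> y)"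
    using assms by (simp add: B.minus_eq B.l_distr B.r_distr B.a_ac B.l_minus B.r_minus B.r_neg2)
  also have "\<dots> \<in> J" using Suc assms by (simp add: J.I_l_closed J.I_r_closed)
  finally show ?case .
qed

theorem theorem4p1:
  fixes A :: "('a, 'm) ring_scheme" and B :: "('b, 'n) ring_scheme"
    and f :: "'a \<Rightarrow> 'b" and J :: "'b set"
  assumes "ring A" and "ring B"
    and "f \<in> ring_hom A B"
    and "ideal J B" and "J \<noteq> carrier B"
    and "{a \<in> carrier A. f a \<in> J} \<subseteq> nilpotents A"
    and "weak_armendariz (hom_plus_ideal A B f J)"
  shows "weak_armendariz (amalgamation A B f J)"
proof -
  interpret A: ring A by fact
  interpret B: ring B by fact
  interpret P: ring "RDirProd A B" using RDirProd_ring assms by blast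
  interpret h: ring_hom_ring A B f using assms by (simp add: ring_hom_ringI2)
  interpret J: ideal J B by fact
  define R where "R = amalgamation A B f J"
  define S where "S = hom_plus_ideal A B f J"
  have cR: "carrier R = {(a, f a \<oplus>\<^bsub>B\<^esub> j) | a j. a \<in> carrier A \<and> j \<in> J}"
    by (simp add: R_def amalgamation_def)
  have cS: "carrier S = {f a \<oplus>\<^bsub>B\<^esub> j | a j. a \<in> carrier A \<and> j \<in> J}"
    by (simp add: S_def hom_plus_ideal_def)
  have rR: "ring R" unfolding R_def amalgamation_def
    by (rule P.subring_is_ring[OF amal_subring[OF assms(1-4)]])
  have rS: "ring S" unfolding S_def hom_plus_ideal_def
    by (rule B.subring_is_ring[OF hpi_subring[OF assms(1-4)]])
  have opsR: "\<And>x y. x \<otimes>\<^bsub>R\<^esub> y = x \<otimes>\<^bsub>RDirProd A B\<^esub> y"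
    "\<And>x y. x \<oplus>\<^bsub>R\<^esub> y = x \<oplus>\<^bsub>RDirProd A B\<^esub> y"
    "\<one>\<^bsub>R\<^esub> = \<one>\<^bsub>RDirProd A B\<^esub>" "\<zero>\<^bsub>R\<^esub> = \<zero>\<^bsub>RDirProd A B\<^esub>"
    by (simp_all add: R_def amalgamation_def)
  have opsS: "\<And>x y. x \<otimes>\<^bsub>S\<^esub> y = x \<otimes>\<^bsub>B\<^esub> y"
    "\<And>x y. x \<oplus>\<^bsub>S\<^esub> y = x \<oplus>\<^bsub>B\<^esub> y"
    "\<one>\<^bsub>S\<^esub> = \<one>\<^bsub>B\<^esub>" "\<zero>\<^bsub>S\<^esub> = \<zero>\<^bsub>B\<^esub>"
    by (simp_all add: S_def hom_plus_ideal_def)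
  have hom: "snd \<in> ring_hom R S"
  proof (rule ring_hom_memI)
    fix x assume "x \<in> carrier R" then show "snd x \<in> carrier S" unfolding cR cS by (force simp: image_iff)
  next
    fix x y assume "x \<in> carrier R" "y \<in> carrier R"
    then show "snd (x \<otimes>\<^bsub>R\<^esub> y) = snd x \<otimes>\<^bsub>S\<^esub> snd y"
      "snd (x \<oplus>\<^bsub>R\<^esub> y) = snd x \<oplus>\<^bsub>S\<^esub> snd y"
      unfolding opsR opsS by (cases x, cases y, simp add: RDP_simps)+
  next
    show "snd \<one>\<^bsub>R\<^esub> = \<one>\<^bsub>S\<^esub>" unfolding opsR opsS by (simp add: RDP_simps)
  qed
  interpret H: ring_hom_ring R S snd using rR rS hom by (simp add: ring_hom_ringI2)
  have UPc: "snd \<circ> p \<in> carrier (UP S)" if "p \<in> carrier (UP R)" for p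
  proof -
    from that obtain m where p: "\<And>i. p i \<in> carrier R" "bound \<zero>\<^bsub>R\<^esub> m p"
      by (auto simp: UP_def up_def Pi_def)
    have "snd (p i) \<in> carrier S" for i using p(1)[of i] unfolding cR cS by (force simp: image_iff)
    moreover have "bound \<zero>\<^bsub>S\<^esub> m (snd \<circ> p)" using p(2)
      by (auto simp: opsR opsS RDP_simps bound_def)
    ultimately show ?thesis by (auto simp: UP_def up_def)
  qed
  have UPm: "snd \<circ> (p \<otimes>\<^bsub>UP R\<^esub> q) = (snd \<circ> p) \<otimes>\<^bsub>UP S\<^esub> (snd \<circ> q)"
    if "p \<in> carrier (UP R)" "q \<in> carrier (UP R)" for p q
  proof -
    have pc: "\<And>i. p i \<in> carrier R" "\<And>i. q i \<in> carrier R"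
      using that by (auto simp: UP_def up_def Pi_def)
    have "snd (\<Oplus>\<^bsub>R\<^esub>i \<in> {..n}. p i \<otimes>\<^bsub>R\<^esub> q (n-i)) = (\<Oplus>\<^bsub>S\<^esub>i \<in> {..n}. snd (p i) \<otimes>\<^bsub>S\<^esub> snd (q (n-i)))" for n
      using pc by (simp add: H.hom_finsum Pi_def comp_def rR ring.ring_simprules(5))
    moreover have "snd \<circ> p \<in> up S" "snd \<circ> q \<in> up S" using UPc that by (auto simp: UP_def)
    ultimately show ?thesis using that by (auto simp: UP_def fun_eq_iff)
  qed
  show ?thesis unfolding weak_armendariz_def R_def[symmetric]
  proof (intro ballI impI allI)
    fix p q i j assume pq: "p \<in> carrier (UP R)" "q \<in> carrier (UP R)" "p \<otimes>\<^bsub>UP R\<^esub> q = \<zero>\<^bsub>UP R\<^esub>"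
    have pc: "\<And>i. p i \<in> carrier R" "\<And>i. q i \<in> carrier R"
      using pq by (auto simp: UP_def up_def Pi_def)
    have "(snd \<circ> p) \<otimes>\<^bsub>UP S\<^esub> (snd \<circ> q) = \<zero>\<^bsub>UP S\<^esub>"
      using UPm[OF pq(1,2)] pq(3) by (simp add: UP_def opsR opsS RDP_simps comp_def)
    then have "coeff (UP S) (snd \<circ> p) i \<otimes>\<^bsub>S\<^esub> coeff (UP S) (snd \<circ> q) j \<in> nilpotents S"
      using assms(7) UPc pq unfolding weak_armendariz_def S_def[symmetric] by blast
    moreover have "coeff (UP S) (snd \<circ> p) i = snd (p i)" "coeff (UP S) (snd \<circ> q) j = snd (q j)"
      using UPc pq by (simp_all add: UP_def)
    ultimately have "snd (p i) \<otimes>\<^bsub>B\<^esub> snd (q j) \<in> nilpotents S" by (simp add: opsS)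
    then obtain n :: nat where "(snd (p i) \<otimes>\<^bsub>B\<^esub> snd (q j)) [^]\<^bsub>S\<^esub> n = \<zero>\<^bsub>S\<^esub>"
      unfolding nilpotents_def by blast
    then have n: "(snd (p i) \<otimes>\<^bsub>B\<^esub> snd (q j)) [^]\<^bsub>B\<^esub> n = \<zero>\<^bsub>B\<^esub>"
      unfolding opsS by (simp add: S_def hom_plus_ideal_def pow_upd)
    obtain a u b v where ab: "p i = (a, f a \<oplus>\<^bsub>B\<^esub> u)" "a \<in> carrier A" "u \<in> J"
      "q j = (b, f b \<oplus>\<^bsub>B\<^esub> v)" "b \<in> carrier A" "v \<in> J"
      using pc[of i] pc[of j] unfolding cR by blast
    have uv: "u \<in> carrier B" "v \<in> carrier B" using ab by auto
    define w where "w = f a \<otimes>\<^bsub>B\<^esub> v \<oplus>\<^bsub>B\<^esub> u \<otimes>\<^bsub>B\<^esub> f b \<oplus>\<^bsub>B\<^esub> u \<otimes>\<^bsub>B\<^esub> v"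
    have wJ: "w \<in> J" unfolding w_def using ab uv by (simp add: J.I_l_closed J.I_r_closed)
    have wc: "w \<in> carrier B" using wJ by auto
    have e: "(f a \<oplus>\<^bsub>B\<^esub> u) \<otimes>\<^bsub>B\<^esub> (f b \<oplus>\<^bsub>B\<^esub> v) = f a \<otimes>\<^bsub>B\<^esub> f b \<oplus>\<^bsub>B\<^esub> w"
      unfolding w_def using ab uv by (simp add: B.l_distr B.r_distr B.a_ac)
    have "f a \<otimes>\<^bsub>B\<^esub> f b \<ominus>\<^bsub>B\<^esub> (f a \<otimes>\<^bsub>B\<^esub> f b \<oplus>\<^bsub>B\<^esub> w) = \<ominus>\<^bsub>B\<^esub> w"
      using ab wc by (simp add: B.minus_eq B.minus_add B.a_ac B.r_neg2 B.r_neg B.l_neg)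
    then have "f a \<otimes>\<^bsub>B\<^esub> f b \<ominus>\<^bsub>B\<^esub> (f a \<oplus>\<^bsub>B\<^esub> u) \<otimes>\<^bsub>B\<^esub> (f b \<oplus>\<^bsub>B\<^esub> v) \<in> J"
      using e wJ by simp
    from pow_diff_in_ideal[OF assms(2,4) _ _ this, of n]
    have "(f a \<otimes>\<^bsub>B\<^esub> f b) [^]\<^bsub>B\<^esub> n \<in> J"
      using n ab uv by (simp add: B.minus_eq)
    then have "f ((a \<otimes>\<^bsub>A\<^esub> b) [^]\<^bsub>A\<^esub> n) \<in> J" using ab by (simp add: h.hom_nat_pow)
    then have "(a \<otimes>\<^bsub>A\<^esub> b) [^]\<^bsub>A\<^esub> n \<in> nilpotents A" using assms(6) ab by auto
    then obtain m :: nat where m: "((a \<otimes>\<^bsub>A\<^esub> b) [^]\<^bsub>A\<^esub> n) [^]\<^bsub>A\<^esub> m = \<zero>\<^bsub>A\<^esub>"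
      by (auto simp: nilpotents_def)
    have pa: "(a \<otimes>\<^bsub>A\<^esub> b) [^]\<^bsub>A\<^esub> (n * m + n) = \<zero>\<^bsub>A\<^esub>"
      using m ab by (simp add: A.nat_pow_mult[symmetric] A.nat_pow_pow)
    have pb: "(snd (p i) \<otimes>\<^bsub>B\<^esub> snd (q j)) [^]\<^bsub>B\<^esub> (n * m + n) = \<zero>\<^bsub>B\<^esub>"
      using n ab uv by (simp add: B.nat_pow_mult[symmetric])
    have cc: "coeff (UP R) p i \<otimes>\<^bsub>R\<^esub> coeff (UP R) q j = p i \<otimes>\<^bsub>R\<^esub> q j"
      using pq by (simp add: UP_def)
    have "(p i \<otimes>\<^bsub>R\<^esub> q j) [^]\<^bsub>R\<^esub> (n * m + n) = \<zero>\<^bsub>R\<^esub>"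
      using pa pb ab by (simp add: R_def amalgamation_def pow_upd RDP_simps pow_RDP)
    moreover have "p i \<otimes>\<^bsub>R\<^esub> q j \<in> carrier R" using pc rR by (simp add: ring.ring_simprules(5))
    ultimately show "coeff (UP R) p i \<otimes>\<^bsub>R\<^esub> coeff (UP R) q j \<in> nilpotents R"
      unfolding cc nilpotents_def by blast
  qed
qed

end
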